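(* Let $S$ be the set of $27$ sextactic points of the Fermat cubic $F$ (see context). Exactly $2268$ of the plane conics that contain six points of $S$ are reducible, i.e. are unions of two distinct lines. For each such conic $L\cup L'$: <ul> <li>each of the lines $L$ and $L'$ contains exactly $3$ points of $S$;</li> <li>the intersection point $L\cap L'$ does not belong to $S$.</li> </ul>
   Context: $F\subset\mathbb{P}^2_{\mathbb{C}}$ is the Fermat cubic $x^3+y^3+z^3=0$. The set of its sextactic points is $$S=\{[x:y:z]\in\mathbb{P}^2: x^3+y^3+z^3=0,\ (x^3-y^3)(y^3-z^3)(z^3-x^3)=0\}.$$ These are the $27$ points of $F$ at which the osculating conic has local contact order at least $6$ with $F$. A conic is a curve defined by a nonzero quadratic form up to scalar. *)

theory Defs
  imports Complex_Main
begin

type_synonym cvec3 = "complex \<times> complex \<times> complex"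
type_synonym qform = "complex \<times> complex \<times> complex \<times> complex \<times> complex \<times> complex"

definition proj_pt :: "cvec3 \<Rightarrow> cvec3 set" where
  "proj_pt v = (case v of (x, y, z) \<Rightarrow> {(c * x, c * y, c * z) | c. c \<noteq> 0})"

definition sextactic :: "cvec3 set set" where
  "sextactic = {proj_pt (x, y, z) | x y z. (x, y, z) \<noteq> (0, 0, 0) \<and>
      x ^ 3 + y ^ 3 + z ^ 3 = 0 \<and> (x ^ 3 - y ^ 3) * (y ^ 3 - z ^ 3) * (z ^ 3 - x ^ 3) = 0}"

definition lin :: "cvec3 \<Rightarrow> cvec3 \<Rightarrow> complex" where
  "lin l v = (case l of (a, b, c) \<Rightarrow> case v of (x, y, z) \<Rightarrow> a * x + b * y + c * z)"

definition qf :: "qform \<Rightarrow> cvec3 \<Rightarrow> complex" where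
  "qf q v = (case q of (a, b, c, d, e, f) \<Rightarrow> case v of (x, y, z) \<Rightarrow>
      a * x\<^sup>2 + b * y\<^sup>2 + c * z\<^sup>2 + d * x * y + e * y * z + f * z * x)"

definition conic_of :: "qform \<Rightarrow> qform set" where
  "conic_of q = (case q of (a, b, c, d, e, f) \<Rightarrow>
      {(k * a, k * b, k * c, k * d, k * e, k * f) | k. k \<noteq> 0})"

definition on_conic :: "qform \<Rightarrow> cvec3 set \<Rightarrow> bool" where
  "on_conic q P = (\<exists>v\<in>P. qf q v = 0)"

definition on_line :: "cvec3 \<Rightarrow> cvec3 set \<Rightarrow> bool" where
  "on_line l P = (\<exists>v\<in>P. lin l v = 0)"

definition same_line :: "cvec3 \<Rightarrow> cvec3 \<Rightarrow> bool" where
  "same_line l l' = (\<exists>k. k \<noteq> 0 \<and> l' = (case l of (a, b, c) \<Rightarrow> (k * a, k * b, k * c)))"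

definition reducible :: "qform \<Rightarrow> bool" where
  "reducible q = (\<exists>l l'. \<forall>v. qf q v = lin l v * lin l' v)"

end

theory Submission
  imports Defs
begin


type_synonym kk = "int \<times> int \<times> int \<times> int \<times> int \<times> int"
definition kadd :: "kk \<Rightarrow> kk \<Rightarrow> kk" where
 "kadd x y = (case x of (a0,a1,a2,b0,b1,b2) \<Rightarrow> case y of (c0,c1,c2,d0,d1,d2) \<Rightarrow> (a0+c0,a1+c1,a2+c2,b0+d0,b1+d1,b2+d2))"
definition kneg :: "kk \<Rightarrow> kk" where
 "kneg x = (case x of (a0,a1,a2,b0,b1,b2) \<Rightarrow> (-a0,-a1,-a2,-b0,-b1,-b2))"
definition cvk :: "nat \<Rightarrow> int \<times> int \<times> int" where
 "cvk f = (if f = 0 then (1,0,0) else if f = 1 then (0,1,0) else if f = 2 then (0,0,1) else (-2,0,0))"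
definition kmono :: "nat \<Rightarrow> nat \<Rightarrow> kk" where
 "kmono e f = (case cvk f of (a,b,c) \<Rightarrow>
    (if e mod 3 = 0 then (a,b,c,0,0,0) else if e mod 3 = 1 then (0,0,0,a,b,c) else (-a,-b,-c,-a,-b,-c)))"
type_synonym mpt = "(nat \<times> nat) \<times> (nat \<times> nat) \<times> (nat \<times> nat)"
definition ptE :: "nat \<Rightarrow> mpt" where
 "ptE k = (let t = k div 9; i = (k mod 9) div 3; j = k mod 3 in
   if t = 0 then ((0,0),(i,0),(j,1)) else if t = 1 then ((j,1),(0,0),(i,0)) else ((i,0),(j,1),(0,0)))"
definition mm :: "nat \<times> nat \<Rightarrow> nat \<times> nat \<Rightarrow> nat \<times> nat \<Rightarrow> kk" where
 "mm x y z = kmono (fst x + fst y + fst z) (snd x + snd y + snd z)"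
definition detM :: "mpt \<Rightarrow> mpt \<Rightarrow> mpt \<Rightarrow> kk" where
 "detM p q r = (case p of (p1,p2,p3) \<Rightarrow> case q of (q1,q2,q3) \<Rightarrow> case r of (r1,r2,r3) \<Rightarrow>
   kadd (kadd (kadd (mm p1 q2 r3) (kneg (mm p1 q3 r2))) (kadd (kneg (mm p2 q1 r3)) (mm p2 q3 r1)))
        (kadd (mm p3 q1 r2) (kneg (mm p3 q2 r1))))"
definition detK :: "nat \<Rightarrow> nat \<Rightarrow> nat \<Rightarrow> kk" where
 "detK i j k = detM (ptE i) (ptE j) (ptE k)"
definition Ts :: "nat list list" where "Ts = [[0,1,2], [0,3,6], [0,4,8], [0,10,20], [0,11,19], [0,12,24], [0,13,26], [0,15,21], [0,17,22], [1,4,7], [1,5,6], [1,9,20], [1,11,18], [1,13,25], [1,14,24], [1,15,23], [1,16,22], [2,3,7], [2,5,8], [2,9,19], [2,10,18], [2,12,25], [2,14,26], [2,16,21], [2,17,23], [3,4,5], [3,9,24], [3,11,25], [3,13,23], [3,14,22], [3,15,18], [3,16,20], [4,9,26], [4,10,25], [4,12,23], [4,14,21], [4,16,19], [4,17,18], [5,10,24], [5,11,26], [5,12,22], [5,13,21], [5,15,19], [5,17,20], [6,7,8], [6,9,21], [6,10,23], [6,12,18], [6,14,19], [6,16,26], [6,17,25], [7,10,22], [7,11,21], [7,12,20], [7,13,19], [7,15,26], [7,17,24], [8,9,22], [8,11,23], [8,13,18], [8,14,20], [8,15,25], [8,16,24], [9,10,11], [9,12,15], [9,13,17], [10,13,16],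 [10,14,15], [11,12,16], [11,14,17], [12,13,14], [15,16,17], [18,19,20], [18,21,24], [18,22,26], [19,22,25], [19,23,24], [20,21,25], [20,23,26], [21,22,23], [24,25,26]]"
definition disjc :: "nat \<Rightarrow> nat \<Rightarrow> bool" where
 "disjc a b = list_all (\<lambda>x. x \<notin> set (Ts!b)) (Ts!a)"

lemma compC0: "list_all (\<lambda>i. list_all (\<lambda>j. list_ex (\<lambda>k. detK i j k \<noteq> (0,0,0,0,0,0)) [0..<27]) [Suc i..<27]) [0..<27]"
  by code_simp
lemma compT1: "list_all (\<lambda>i. list_all (\<lambda>j. list_all (\<lambda>k. detK i j k = (0,0,0,0,0,0) \<longrightarrow> [i,j,k] \<in> set Ts) [Suc j..<27]) [Suc i..<27]) [0..<3]"
  by code_simp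
lemma compT2: "list_all (\<lambda>i. list_all (\<lambda>j. list_all (\<lambda>k. detK i j k = (0,0,0,0,0,0) \<longrightarrow> [i,j,k] \<in> set Ts) [Suc j..<27]) [Suc i..<27]) [3..<27]"
  by code_simp
lemma compTs: "list_all (\<lambda>t. length t = 3 \<and> t!0 < t!1 \<and> t!1 < t!2 \<and> t!2 < 27 \<and> detK (t!0) (t!1) (t!2) = (0,0,0,0,0,0)) Ts"
  by code_simp
lemma compLen: "length Ts = 81"
  by (simp add: Ts_def)
lemma compC5: "list_all (\<lambda>a. list_all (\<lambda>b. length (filter (\<lambda>x. x \<in> set (Ts!b)) (Ts!a)) \<le> 1) [Suc a..<81]) [0..<81]"
  by code_simp
lemma compCount: "sum_list (map (\<lambda>a. length (filter (\<lambda>b. disjc a b) [Suc a..<81])) [0..<81]) = 2268"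
  by code_simp


definition om :: complex where "om = Complex (-1/2) (sqrt 3 / 2)"
definition cc :: complex where "cc = - complex_of_real (root 3 2)"

lemma om2: "om^2 + om + 1 = 0"
proof -
  have s: "sqrt 3 * sqrt 3 = 3" by simp
  show ?thesis by (simp add: om_def power2_eq_square complex_eq_iff s field_simps)
qed

lemma om2': "om^2 = -1 - om" using om2 by (simp add: algebra_simps eq_neg_iff_add_eq_0)

lemma om3: "om^3 = 1"
proof -
  have "om^3 - 1 = (om - 1) * (om^2 + om + 1)" by (simp add: algebra_simps power2_eq_square power3_eq_cube)
  thus ?thesis using om2 by simp
qed

lemma cc3: "cc^3 = -2"
proof -
  have "(root 3 2)^3 = (2::real)" by (simp add: real_root_pow_pos2)
  hence "(complex_of_real (root 3 2))^3 = 2" by (metis of_real_numeral of_real_power)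
  thus ?thesis by (simp add: cc_def power3_eq_cube)
qed

lemma om_pow_mod: "om ^ e = om ^ (e mod 3)"
proof -
  have "om ^ e = om ^ (3 * (e div 3) + e mod 3)" by simp
  also have "\<dots> = (om^3)^(e div 3) * om^(e mod 3)" by (metis power_add power_mult)
  finally show ?thesis by (simp add: om3)
qed

lemma om_pow3: "(om ^ i) ^ 3 = 1"
  by (metis om3 power_mult_distrib power_one power_mult mult.commute)

definition ev :: "kk \<Rightarrow> complex" where
 "ev x = (case x of (a0,a1,a2,b0,b1,b2) \<Rightarrow> (of_int a0 + of_int a1 * cc + of_int a2 * cc^2)
     + om * (of_int b0 + of_int b1 * cc + of_int b2 * cc^2))"

lemma ev_kadd: "ev (kadd x y) = ev x + ev y"
  by (cases x; cases y) (simp add: ev_def kadd_def algebra_simps)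
lemma ev_kneg: "ev (kneg x) = - ev x"
  by (cases x) (simp add: ev_def kneg_def algebra_simps)

lemma ev_kmono: assumes "f \<le> 3" shows "ev (kmono e f) = om ^ e * cc ^ f"
proof -
  have f: "f = 0 \<or> f = 1 \<or> f = 2 \<or> f = 3" using assms by auto
  have e: "e mod 3 = 0 \<or> e mod 3 = 1 \<or> e mod 3 = 2" by auto
  have c3: "cc^3 = -2" by (rule cc3)
  show ?thesis
    apply (subst om_pow_mod)
    using f e
    apply (elim disjE)
    apply (simp_all add: kmono_def cvk_def ev_def c3 om2' algebra_simps)
    done
qed

lemma no_cube: "(y::int)^3 = 2 * z^3 \<Longrightarrow> z = 0"
proof (induction "nat \<bar>z\<bar>" arbitrary: y z rule: less_induct)
  case less
  show ?case
  proof (rule ccontr)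
    assume z0: "z \<noteq> 0"
    have "even (y^3)" using less.prems by simp
    hence "even y" by simp
    then obtain a where a: "y = 2*a" by blast
    have "z^3 = 4 * a^3" using less.prems a by (simp add: power_mult_distrib)
    hence "even (z^3)" by simp
    hence "even z" by simp
    then obtain b where b: "z = 2*b" by blast
    have "a^3 = 2 * b^3" using \<open>z^3 = 4 * a^3\<close> b by (simp add: power_mult_distrib)
    moreover have "nat \<bar>b\<bar> < nat \<bar>z\<bar>" using b z0 by auto
    ultimately have "b = 0" using less.hyps by blast
    thus False using b z0 by simp
  qed
qed

lemma lin_indep:
  fixes x y z :: int and r :: real
  assumes r3: "r^3 = -2" and h: "x + y*r + z*r^2 = 0"
  shows "x = 0 \<and> y = 0 \<and> z = 0"
proof -
  have h2: "x*r + y*r^2 - 2*z = 0"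
  proof -
    have "(x + y*r + z*r^2) * r = 0" using h by simp
    hence "x*r + y*r^2 + z*r^3 = 0" by (simp add: algebra_simps power2_eq_square power3_eq_cube)
    thus ?thesis using r3 by simp
  qed
  have key: "r * (x*z - y^2) = x*y + 2*z^2"
  proof -
    have "z*(x*r + y*r^2 - 2*z) - y*(x + y*r + z*r^2) = 0" using h h2 by simp
    thus ?thesis by (simp add: algebra_simps power2_eq_square)
  qed
  show ?thesis
  proof (cases "x*z = y^2")
    case False
    define P where "P = x*y + 2*z^2"
    define Q where "Q = x*z - y^2"
    have Q0: "Q \<noteq> 0" using False unfolding Q_def by simp
    have kq: "r * of_int Q = of_int P" using key unfolding P_def Q_def by simp
    have "(of_int P)^3 = (r * of_int Q)^3" using kq by simp
    also have "\<dots> = r^3 * (of_int Q)^3" by (simp add: power_mult_distrib)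
    finally have "real_of_int (P^3) = real_of_int (-2 * Q^3)" using r3 by simp
    hence "P^3 = -2 * Q^3" by (simp only: of_int_eq_iff)
    hence "(-P)^3 = 2 * Q^3" by (simp add: power_minus_odd)
    hence "Q = 0" by (rule no_cube)
    thus ?thesis using Q0 by simp
  next
    case True
    have "real_of_int x * real_of_int z = real_of_int y ^2" using True by (metis of_int_mult of_int_power)
    hence "real_of_int (x*y + 2*z^2) = 0" using key by simp
    hence xy: "x*y = -2*z^2" by (simp only: of_int_eq_0_iff)
    show ?thesis
    proof (cases "z = 0")
      case True
      with \<open>x*z = y^2\<close> have "y = 0" by simp
      with True h show ?thesis by simp
    next
      case False
      have "y^3 = y * (x*z)" using \<open>x*z = y^2\<close> by (simp add: power2_eq_square power3_eq_cube)
      also have "\<dots> = (x*y) * z" by (simp add: algebra_simps)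
      finally have "y^3 = -2 * z^3" using xy by (simp add: power2_eq_square power3_eq_cube)
      hence "(-y)^3 = 2 * z^3" by (simp add: power_minus_odd)
      hence "z = 0" by (rule no_cube)
      with False show ?thesis by simp
    qed
  qed
qed


lemma ev_zero: assumes "ev x = 0" shows "x = (0,0,0,0,0,0)"
proof -
  obtain a0 a1 a2 b0 b1 b2 where x: "x = (a0,a1,a2,b0,b1,b2)" by (cases x) auto
  define r where "r = - root 3 2"
  have r3: "r^3 = -2" unfolding r_def by (simp add: real_root_pow_pos2 power_minus_odd)
  have ccr: "cc = complex_of_real r" unfolding cc_def r_def by simp
  define A where "A = a0 + a1*r + a2*r^2"
  define B where "B = b0 + b1*r + b2*r^2"
  have "ev x = complex_of_real A + om * complex_of_real B"
    unfolding x ev_def A_def B_def ccr by simp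
  hence e: "complex_of_real A + om * complex_of_real B = 0" using assms by simp
  have "Im (complex_of_real A + om * complex_of_real B) = B * (sqrt 3 / 2)"
    by (simp add: om_def)
  hence "B = 0" using e by simp
  hence "A = 0" using e by simp
  from lin_indep[OF r3] \<open>A = 0\<close> \<open>B = 0\<close> show ?thesis
    unfolding x A_def B_def by simp
qed

lemma ev_zero_iff: "ev x = 0 \<longleftrightarrow> x = (0,0,0,0,0,0)"
proof
  assume "ev x = 0" thus "x = (0,0,0,0,0,0)" by (rule ev_zero)
next
  assume "x = (0,0,0,0,0,0)" thus "ev x = 0" by (simp add: ev_def)
qed


fun det3 :: "cvec3 \<Rightarrow> cvec3 \<Rightarrow> cvec3 \<Rightarrow> complex" where
 "det3 (u1,u2,u3) (v1,v2,v3) (w1,w2,w3) = u1*(v2*w3 - v3*w2) - u2*(v1*w3 - v3*w1) + u3*(v1*w2 - v2*w1)"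
fun cross3 :: "cvec3 \<Rightarrow> cvec3 \<Rightarrow> cvec3" where
 "cross3 (u1,u2,u3) (v1,v2,v3) = (u2*v3 - u3*v2, u3*v1 - u1*v3, u1*v2 - u2*v1)"
fun sm3 :: "complex \<Rightarrow> cvec3 \<Rightarrow> cvec3" where
 "sm3 c (u1,u2,u3) = (c*u1, c*u2, c*u3)"

lemma lin_cross: "lin (cross3 u v) w = det3 u v w"
  by (cases u; cases v; cases w) (simp add: lin_def algebra_simps)

fun mv :: "nat \<times> nat \<Rightarrow> complex" where "mv (e,f) = om^e * cc^f"
fun mvp :: "mpt \<Rightarrow> cvec3" where "mvp (a,b,c) = (mv a, mv b, mv c)"
definition pv :: "nat \<Rightarrow> cvec3" where "pv k = mvp (ptE k)"

fun okp :: "mpt \<Rightarrow> bool" where "okp ((e1,f1),(e2,f2),(e3,f3)) = (f1 \<le> 1 \<and> f2 \<le> 1 \<and> f3 \<le> 1)"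

lemma ev_mm: "snd x + snd y + snd z \<le> 3 \<Longrightarrow> ev (mm x y z) = mv x * mv y * mv z"
  by (cases x; cases y; cases z) (simp add: mm_def ev_kmono power_add)

lemma detM_ev: assumes "okp p" "okp q" "okp r"
  shows "ev (detM p q r) = det3 (mvp p) (mvp q) (mvp r)"
proof -
  obtain p1 p2 p3 where p: "p = (p1,p2,p3)" by (cases p) auto
  obtain q1 q2 q3 where q: "q = (q1,q2,q3)" by (cases q) auto
  obtain r1 r2 r3 where r: "r = (r1,r2,r3)" by (cases r) auto
  have b: "snd p1 \<le> 1" "snd p2 \<le> 1" "snd p3 \<le> 1" "snd q1 \<le> 1" "snd q2 \<le> 1" "snd q3 \<le> 1"
     "snd r1 \<le> 1" "snd r2 \<le> 1" "snd r3 \<le> 1"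
    using assms unfolding p q r by (cases p1; cases p2; cases p3; cases q1; cases q2; cases q3; cases r1; cases r2; cases r3; simp)+
  show ?thesis unfolding p q r detM_def
    using b by (simp add: ev_kadd ev_kneg ev_mm algebra_simps)
qed

lemma okp_ptE: "okp (ptE k)"
  by (simp add: ptE_def Let_def)

lemma detK_ev: "ev (detK i j k) = det3 (pv i) (pv j) (pv k)"
  unfolding detK_def pv_def by (rule detM_ev[OF okp_ptE okp_ptE okp_ptE])

lemma det_zero_iff: "det3 (pv i) (pv j) (pv k) = 0 \<longleftrightarrow> detK i j k = (0,0,0,0,0,0)"
  by (metis detK_ev ev_zero_iff)


definition pp :: "nat \<Rightarrow> cvec3 set" where "pp k = proj_pt (pv k)"

lemma mem_proj: "v \<in> proj_pt u \<longleftrightarrow> (\<exists>c. c \<noteq> 0 \<and> v = sm3 c u)"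
  by (cases u) (auto simp: proj_pt_def)

lemma sm3_sm3: "sm3 d (sm3 c u) = sm3 (d*c) u"
  by (cases u) simp

lemma sm3_1: "sm3 1 u = u" by (cases u) simp

lemma proj_sm: assumes "c \<noteq> 0" shows "proj_pt (sm3 c u) = proj_pt u"
proof (rule set_eqI)
  fix x
  show "x \<in> proj_pt (sm3 c u) \<longleftrightarrow> x \<in> proj_pt u"
    unfolding mem_proj sm3_sm3
  proof
    assume "\<exists>d. d \<noteq> 0 \<and> x = sm3 (d * c) u"
    then obtain d where "d \<noteq> 0" "x = sm3 (d*c) u" by blast
    thus "\<exists>d. d \<noteq> 0 \<and> x = sm3 d u" using assms by (intro exI[of _ "d*c"]) simp
  next
    assume "\<exists>d. d \<noteq> 0 \<and> x = sm3 d u"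
    then obtain d where "d \<noteq> 0" "x = sm3 d u" by blast
    thus "\<exists>d. d \<noteq> 0 \<and> x = sm3 (d*c) u" using assms by (intro exI[of _ "d/c"]) simp
  qed
qed

lemma lin_sm: "lin l (sm3 c v) = c * lin l v"
  by (cases l; cases v) (simp add: lin_def algebra_simps)

lemma qf_sm: "qf q (sm3 c v) = c^2 * qf q v"
  by (cases q; cases v) (simp add: qf_def algebra_simps power2_eq_square)

lemma self_proj: "v \<in> proj_pt v"
  unfolding mem_proj by (intro exI[of _ 1]) (simp add: sm3_1)

lemma on_line_proj: "on_line l (proj_pt v) \<longleftrightarrow> lin l v = 0"
proof
  assume "on_line l (proj_pt v)"
  then obtain w where "w \<in> proj_pt v" "lin l w = 0" unfolding on_line_def by blast
  thus "lin l v = 0" unfolding mem_proj by (auto simp: lin_sm)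
next
  assume "lin l v = 0" thus "on_line l (proj_pt v)" unfolding on_line_def using self_proj by blast
qed

lemma on_conic_proj: "on_conic q (proj_pt v) \<longleftrightarrow> qf q v = 0"
proof
  assume "on_conic q (proj_pt v)"
  then obtain w where "w \<in> proj_pt v" "qf q w = 0" unfolding on_conic_def by blast
  thus "qf q v = 0" unfolding mem_proj by (auto simp: qf_sm)
next
  assume "qf q v = 0" thus "on_conic q (proj_pt v)" unfolding on_conic_def using self_proj by blast
qed

lemma cuberoot: assumes "w^3 = x^3" shows "\<exists>i<3. w = om^i * x"
proof -
  have "(w - x)*(w - om*x)*(w - om^2*x) = w^3 - (om^2+om+1)*w^2*x + om*(om^2+om+1)*w*x^2 - om^3*x^3"
    by (simp add: algebra_simps power2_eq_square power3_eq_cube)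
  also have "\<dots> = 0" using assms by (simp add: om2 om3)
  finally have "w = x \<or> w = om*x \<or> w = om^2*x" by auto
  thus ?thesis
  proof (elim disjE)
    assume "w = x" thus ?thesis by (intro exI[of _ 0]) simp
  next
    assume "w = om*x" thus ?thesis by (intro exI[of _ 1]) simp
  next
    assume "w = om^2*x" thus ?thesis by (intro exI[of _ 2]) simp
  qed
qed

lemma pv0: assumes "i < 3" "j < 3" shows "pv (3*i+j) = (1, om^i, om^j*cc)"
proof -
  have "i \<in> {0,1,2}" "j \<in> {0,1,2}" using assms by auto
  thus ?thesis by (auto simp: pv_def ptE_def)
qed
lemma pv1: assumes "i < 3" "j < 3" shows "pv (9+3*i+j) = (om^j*cc, 1, om^i)"
proof -
  have "i \<in> {0,1,2}" "j \<in> {0,1,2}" using assms by auto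
  thus ?thesis by (auto simp: pv_def ptE_def)
qed
lemma pv2: assumes "i < 3" "j < 3" shows "pv (18+3*i+j) = (om^i, om^j*cc, 1)"
proof -
  have "i \<in> {0,1,2}" "j \<in> {0,1,2}" using assms by auto
  thus ?thesis by (auto simp: pv_def ptE_def)
qed


lemma decomp27: assumes "k < (27::nat)" shows "\<exists>t i j. t < 3 \<and> i < 3 \<and> j < 3 \<and> k = 9*t+3*i+j"
proof (intro exI conjI)
  show "k div 9 < 3" using assms by simp
  show "k mod 9 div 3 < 3" by simp
  show "k mod 3 < 3" by simp
  show "k = 9 * (k div 9) + 3 * (k mod 9 div 3) + k mod 3" by presburger
qed

lemma cube_cc: "(om^j * cc)^3 = -2"
  by (simp add: power_mult_distrib om_pow3 cc3)

lemma pv_cond: assumes "k < 27"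
  shows "pv k \<noteq> (0,0,0) \<and> fst (pv k)^3 + fst (snd (pv k))^3 + snd (snd (pv k))^3 = 0 \<and>
     (fst (pv k)^3 - fst (snd (pv k))^3) * (fst (snd (pv k))^3 - snd (snd (pv k))^3) * (snd (snd (pv k))^3 - fst (pv k)^3) = 0"
proof -
  obtain t i j where tij: "t < 3" "i < 3" "j < 3" "k = 9*t+3*i+j" using decomp27[OF assms] by blast
  have "t = 0 \<or> t = 1 \<or> t = 2" using tij by auto
  thus ?thesis
  proof (elim disjE)
    assume "t = 0"
    hence "pv k = (1, om^i, om^j*cc)" using tij pv0 by simp
    thus ?thesis by (simp add: om_pow3 cube_cc)
  next
    assume "t = 1"
    hence "pv k = (om^j*cc, 1, om^i)" using tij pv1 by simp
    thus ?thesis by (simp add: om_pow3 cube_cc)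
  next
    assume "t = 2"
    hence "pv k = (om^i, om^j*cc, 1)" using tij pv2 by (simp add: add.assoc)
    thus ?thesis by (simp add: om_pow3 cube_cc)
  qed
qed

lemma sext_eq: "sextactic = pp ` {..<27}"
proof (rule set_eqI)
  fix P
  show "P \<in> sextactic \<longleftrightarrow> P \<in> pp ` {..<27}"
  proof
    assume "P \<in> sextactic"
    then obtain x y z where P: "P = proj_pt (x,y,z)" and nz: "(x,y,z) \<noteq> (0,0,0)"
      and F: "x^3 + y^3 + z^3 = 0" and pr: "(x^3 - y^3) * (y^3 - z^3) * (z^3 - x^3) = 0"
      unfolding sextactic_def by blast
    from pr have "x^3 = y^3 \<or> y^3 = z^3 \<or> z^3 = x^3" by auto
    thus "P \<in> pp ` {..<27}"
    proof (elim disjE)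
      assume h: "x^3 = y^3"
      have x0: "x \<noteq> 0"
      proof
        assume "x = 0"
        hence "y = 0" using h by simp
        hence "z = 0" using F \<open>x = 0\<close> by simp
        thus False using nz \<open>x = 0\<close> \<open>y = 0\<close> by simp
      qed
      obtain i where i: "i < 3" "y = om^i * x" using cuberoot[OF h[symmetric]] by blast
      have "z^3 = (cc*x)^3" using F h cc3 by algebra
      then obtain j where j: "j < 3" "z = om^j * (cc*x)" using cuberoot by blast
      have "(x,y,z) = sm3 x (pv (3*i+j))" using i j by (simp add: pv0)
      hence "P = pp (3*i+j)" unfolding P pp_def using x0 by (simp add: proj_sm)
      moreover have "3*i+j < 27" using i j by simp
      ultimately show ?thesis by blast
    next
      assume h: "y^3 = z^3"
      have y0: "y \<noteq> 0"
      proof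
        assume "y = 0"
        hence "z = 0" using h by simp
        hence "x = 0" using F \<open>y = 0\<close> by simp
        thus False using nz \<open>y = 0\<close> \<open>z = 0\<close> by simp
      qed
      obtain i where i: "i < 3" "z = om^i * y" using cuberoot[OF h[symmetric]] by blast
      have "x^3 = (cc*y)^3" using F h cc3 by algebra
      then obtain j where j: "j < 3" "x = om^j * (cc*y)" using cuberoot by blast
      have "(x,y,z) = sm3 y (pv (9+3*i+j))" using i j by (simp add: pv1)
      hence "P = pp (9+3*i+j)" unfolding P pp_def using y0 by (simp add: proj_sm)
      moreover have "9+3*i+j < 27" using i j by simp
      ultimately show ?thesis by blast
    next
      assume h: "z^3 = x^3"
      have z0: "z \<noteq> 0"
      proof
        assume "z = 0"
        hence "x = 0" using h by simp
        hence "y = 0" using F \<open>z = 0\<close> by simp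
        thus False using nz \<open>x = 0\<close> \<open>z = 0\<close> by simp
      qed
      obtain i where i: "i < 3" "x = om^i * z" using cuberoot[OF h[symmetric]] by blast
      have "y^3 = (cc*z)^3" using F h cc3 by algebra
      then obtain j where j: "j < 3" "y = om^j * (cc*z)" using cuberoot by blast
      have "(x,y,z) = sm3 z (pv (18+3*i+j))" using i j by (simp add: pv2)
      hence "P = pp (18+3*i+j)" unfolding P pp_def using z0 by (simp add: proj_sm)
      moreover have "18+3*i+j < 27" using i j by simp
      ultimately show ?thesis by blast
    qed
  next
    assume "P \<in> pp ` {..<27}"
    then obtain k where k: "k < 27" "P = pp k" by auto
    obtain x y z where v: "pv k = (x,y,z)" by (cases "pv k") auto
    show "P \<in> sextactic" unfolding sextactic_def using pv_cond[OF k(1)] k(2) v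
      by (auto simp: pp_def)
  qed
qed


lemma det3_swap12: "det3 v u w = - det3 u v w"
  by (cases u; cases v; cases w) (simp add: algebra_simps)
lemma det3_swap23: "det3 u w v = - det3 u v w"
  by (cases u; cases v; cases w) (simp add: algebra_simps)
lemma det3_rep12: "det3 u u w = 0"
  by (cases u; cases w) (simp add: algebra_simps)
lemma det3_rep13: "det3 u v u = 0"
  by (cases u; cases v) (simp add: algebra_simps)
lemma det3_rep23: "det3 u v v = 0"
  by (cases u; cases v) (simp add: algebra_simps)

definition Z :: "nat \<Rightarrow> nat \<Rightarrow> nat \<Rightarrow> bool" where
  "Z a b c = (det3 (pv a) (pv b) (pv c) = 0)"

lemma Z_perm: "Z a b c \<Longrightarrow> Z b a c \<and> Z a c b \<and> Z b c a \<and> Z c a b \<and> Z c b a"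
  unfolding Z_def by (metis det3_swap12 det3_swap23 neg_equal_0_iff_equal)




lemma C0: assumes "i < 27" "j < 27" "i \<noteq> j" shows "\<exists>k<27. \<not> Z i j k"
proof -
  have h: "\<forall>i\<in>{0..<27}. \<forall>j\<in>{Suc i..<27}. \<exists>k\<in>{0..<27}. detK i j k \<noteq> (0,0,0,0,0,0)"
    using compC0 by (simp only: list_all_iff list_ex_iff set_upt)
  have g: "\<exists>k<27. detK a b k \<noteq> (0,0,0,0,0,0)" if "a < b" "b < 27" for a b
  proof -
    have "a \<in> {0..<27}" "b \<in> {Suc a..<27}" using that by auto
    with h obtain k where "k \<in> {0..<27}" "detK a b k \<noteq> (0,0,0,0,0,0)" by blast
    thus ?thesis by auto
  qed
  show ?thesis
  proof (cases "i < j")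
    case True
    then obtain k where "k < 27" "detK i j k \<noteq> (0,0,0,0,0,0)" using g assms by blast
    thus ?thesis unfolding Z_def det_zero_iff by blast
  next
    case False
    hence "j < i" using assms by simp
    then obtain k where k: "k < 27" "detK j i k \<noteq> (0,0,0,0,0,0)" using g assms by blast
    have "\<not> Z i j k"
    proof
      assume "Z i j k" hence "Z j i k" using Z_perm by blast
      thus False using k unfolding Z_def det_zero_iff by blast
    qed
    thus ?thesis using k by blast
  qed
qed

lemma Tsorted: assumes "i < j" "j < k" "k < 27" "Z i j k" shows "[i,j,k] \<in> set Ts"
proof -
  have h1: "\<forall>i\<in>{0..<3}. \<forall>j\<in>{Suc i..<27}. \<forall>k\<in>{Suc j..<27}. detK i j k = (0,0,0,0,0,0) \<longrightarrow> [i,j,k] \<in> set Ts"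
    using compT1 by (simp only: list_all_iff set_upt)
  have h2: "\<forall>i\<in>{3..<27}. \<forall>j\<in>{Suc i..<27}. \<forall>k\<in>{Suc j..<27}. detK i j k = (0,0,0,0,0,0) \<longrightarrow> [i,j,k] \<in> set Ts"
    using compT2 by (simp only: list_all_iff set_upt)
  have d: "detK i j k = (0,0,0,0,0,0)" using assms(4) unfolding Z_def det_zero_iff .
  have m: "j \<in> {Suc i..<27}" "k \<in> {Suc j..<27}" using assms by auto
  show ?thesis
  proof (cases "i < 3")
    case True hence "i \<in> {0..<3}" by simp
    thus ?thesis using h1 d m by blast
  next
    case False hence "i \<in> {3..<27}" using assms by simp
    thus ?thesis using h2 d m by blast
  qed
qed

lemma tri: assumes "a < 27" "b < 27" "c < 27" "a \<noteq> b" "b \<noteq> c" "a \<noteq> c" "Z a b c"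
  shows "\<exists>t\<in>set Ts. set t = {a,b,c}"
proof -
  have P: "Z b a c" "Z a c b" "Z b c a" "Z c a b" "Z c b a" using Z_perm[OF assms(7)] by auto
  have "a<b \<and> b<c \<or> a<c \<and> c<b \<or> b<a \<and> a<c \<or> b<c \<and> c<a \<or> c<a \<and> a<b \<or> c<b \<and> b<a"
    using assms by arith
  thus ?thesis
  proof (elim disjE)
    assume h: "a<b \<and> b<c" thus ?thesis using Tsorted[of a b c] assms by (intro bexI[of _ "[a,b,c]"]) auto
  next
    assume h: "a<c \<and> c<b" thus ?thesis using Tsorted[of a c b] assms P by (intro bexI[of _ "[a,c,b]"]) auto
  next
    assume h: "b<a \<and> a<c" thus ?thesis using Tsorted[of b a c] assms P by (intro bexI[of _ "[b,a,c]"]) auto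
  next
    assume h: "b<c \<and> c<a" thus ?thesis using Tsorted[of b c a] assms P by (intro bexI[of _ "[b,c,a]"]) auto
  next
    assume h: "c<a \<and> a<b" thus ?thesis using Tsorted[of c a b] assms P by (intro bexI[of _ "[c,a,b]"]) auto
  next
    assume h: "c<b \<and> b<a" thus ?thesis using Tsorted[of c b a] assms P by (intro bexI[of _ "[c,b,a]"]) auto
  qed
qed

lemma TsOK: assumes "t \<in> set Ts"
  shows "length t = 3 \<and> t!0 < t!1 \<and> t!1 < t!2 \<and> t!2 < 27 \<and> Z (t!0) (t!1) (t!2)"
  using compTs assms unfolding list_all_iff Z_def det_zero_iff by blast

lemma Ts_set: assumes "t \<in> set Ts" shows "set t = {t!0, t!1, t!2}" "card (set t) = 3" "set t \<subseteq> {..<27}"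
proof -
  have L: "length t = 3" and o: "t!0 < t!1" "t!1 < t!2" "t!2 < 27" using TsOK[OF assms] by auto
  have "t = [t!0, t!1, t!2]" using L by (auto intro!: nth_equalityI simp: less_Suc_eq numeral_eq_Suc)
  hence "set t = set [t!0, t!1, t!2]" by metis
  thus s: "set t = {t!0, t!1, t!2}" by simp
  show "card (set t) = 3" unfolding s using o by simp
  show "set t \<subseteq> {..<27}" unfolding s using o by auto
qed

lemma C5: assumes "t1 \<in> set Ts" "t2 \<in> set Ts" "t1 \<noteq> t2" shows "card (set t1 \<inter> set t2) \<le> 1"
proof -
  have h: "\<forall>a\<in>{0..<81}. \<forall>b\<in>{Suc a..<81}. length (filter (\<lambda>x. x \<in> set (Ts!b)) (Ts!a)) \<le> 1"
    using compC5 by (simp only: list_all_iff set_upt)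
  obtain a where a: "a < 81" "Ts!a = t1" using assms(1) compLen by (metis in_set_conv_nth)
  obtain b where b: "b < 81" "Ts!b = t2" using assms(2) compLen by (metis in_set_conv_nth)
  have ab: "a \<noteq> b" using a b assms(3) by auto
  have gen: "card (set (Ts!a') \<inter> set (Ts!b')) \<le> 1" if "a' < b'" "b' < 81" for a' b'
  proof -
    have "card (set (Ts!a') \<inter> set (Ts!b')) = card (set (filter (\<lambda>x. x \<in> set (Ts!b')) (Ts!a')))"
      by (simp add: Int_def)
    also have "\<dots> \<le> length (filter (\<lambda>x. x \<in> set (Ts!b')) (Ts!a'))" by (rule card_length)
    also have "\<dots> \<le> 1"
    proof -
      have "a' \<in> {0..<81}" "b' \<in> {Suc a'..<81}" using that by auto
      thus ?thesis using h by blast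
    qed
    finally show ?thesis .
  qed
  show ?thesis
  proof (cases "a < b")
    case True thus ?thesis using gen[of a b] a b by blast
  next
    case False hence "b < a" using ab by simp
    thus ?thesis using gen[of b a] a b by (metis Int_commute)
  qed
qed

lemma kernel: assumes "l \<noteq> (0,0,0)" "lin l u = 0" "lin l v = 0" "lin l w = 0" shows "det3 u v w = 0"
proof -
  obtain a b c where l: "l = (a,b,c)" by (cases l) auto
  obtain u1 u2 u3 where u: "u = (u1,u2,u3)" by (cases u) auto
  obtain v1 v2 v3 where v: "v = (v1,v2,v3)" by (cases v) auto
  obtain w1 w2 w3 where w: "w = (w1,w2,w3)" by (cases w) auto
  have e: "a*u1 + b*u2 + c*u3 = 0" "a*v1 + b*v2 + c*v3 = 0" "a*w1 + b*w2 + c*w3 = 0"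
    using assms unfolding l u v w lin_def by simp_all
  let ?d = "det3 u v w"
  have ia: "a * ?d = (v2*w3-v3*w2)*(a*u1 + b*u2 + c*u3) + (w2*u3-w3*u2)*(a*v1 + b*v2 + c*v3) + (u2*v3-u3*v2)*(a*w1 + b*w2 + c*w3)"
    unfolding u v w by (simp add: algebra_simps)
  have ib: "b * ?d = (v3*w1-v1*w3)*(a*u1 + b*u2 + c*u3) + (w3*u1-w1*u3)*(a*v1 + b*v2 + c*v3) + (u3*v1-u1*v3)*(a*w1 + b*w2 + c*w3)"
    unfolding u v w by (simp add: algebra_simps)
  have ic: "c * ?d = (v1*w2-v2*w1)*(a*u1 + b*u2 + c*u3) + (w1*u2-w2*u1)*(a*v1 + b*v2 + c*v3) + (u1*v2-u2*v1)*(a*w1 + b*w2 + c*w3)"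
    unfolding u v w by (simp add: algebra_simps)
  have "a * ?d = 0" "b * ?d = 0" "c * ?d = 0" using ia ib ic e by simp_all
  thus ?thesis using assms(1) l by auto
qed

lemma four: assumes "finite A" "4 \<le> card A"
  shows "\<exists>a b c d. a\<in>A \<and> b\<in>A \<and> c\<in>A \<and> d\<in>A \<and> a\<noteq>b \<and> a\<noteq>c \<and> a\<noteq>d \<and> b\<noteq>c \<and> b\<noteq>d \<and> c\<noteq>d"
proof -
  have "Suc 3 \<le> card A" using assms by simp
  then obtain a B where 1: "A = insert a B" "a \<notin> B" "3 \<le> card B" "finite B"
    using card_le_Suc_iff[of 3 A] by blast
  have "Suc 2 \<le> card B" using 1 by simp
  then obtain b C where 2: "B = insert b C" "b \<notin> C" "2 \<le> card C" "finite C"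
    using card_le_Suc_iff[of 2 B] by blast
  have "Suc 1 \<le> card C" using 2 by simp
  then obtain c D where 3: "C = insert c D" "c \<notin> D" "1 \<le> card D" "finite D"
    using card_le_Suc_iff[of 1 C] by blast
  have "D \<noteq> {}" using 3 by auto
  then obtain d where "d \<in> D" by blast
  hence "a\<in>A \<and> b\<in>A \<and> c\<in>A \<and> d\<in>A \<and> a\<noteq>b \<and> a\<noteq>c \<and> a\<noteq>d \<and> b\<noteq>c \<and> b\<noteq>d \<and> c\<noteq>d"
    using 1 2 3 by blast
  thus ?thesis by blast
qed

definition Il :: "cvec3 \<Rightarrow> nat set" where "Il l = {k. k < 27 \<and> lin l (pv k) = 0}"

lemma Il_fin: "finite (Il l)" unfolding Il_def by simp

lemma le3: assumes "l \<noteq> (0,0,0)" shows "card (Il l) \<le> 3"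
proof (rule ccontr)
  assume "\<not> card (Il l) \<le> 3"
  then obtain a b c d where abcd: "a\<in>Il l" "b\<in>Il l" "c\<in>Il l" "d\<in>Il l" "a\<noteq>b" "a\<noteq>c" "a\<noteq>d" "b\<noteq>c" "b\<noteq>d" "c\<noteq>d"
    using four[OF Il_fin, of l] by force
  have lt: "a < 27" "b < 27" "c < 27" "d < 27" using abcd unfolding Il_def by auto
  have "Z a b c" "Z a b d" using abcd kernel[OF assms] unfolding Il_def Z_def by auto
  then obtain t1 t2 where t: "t1 \<in> set Ts" "set t1 = {a,b,c}" "t2 \<in> set Ts" "set t2 = {a,b,d}"
    using tri lt abcd by metis
  have "t1 \<noteq> t2" using t abcd by auto
  hence "card (set t1 \<inter> set t2) \<le> 1" using C5 t by blast
  moreover have "{a,b} \<subseteq> set t1 \<inter> set t2" using t by auto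
  hence "card {a,b} \<le> card (set t1 \<inter> set t2)" by (intro card_mono) auto
  ultimately show False using abcd by simp
qed

lemma eq3: assumes "l \<noteq> (0,0,0)" "card (Il l) = 3" shows "\<exists>t\<in>set Ts. Il l = set t"
proof -
  obtain a b c where abc: "Il l = {a,b,c}" "a\<noteq>b" "b\<noteq>c" "a\<noteq>c" using assms(2) card_3_iff by metis
  have lt: "a < 27" "b < 27" "c < 27" using abc unfolding Il_def by auto
  have "Z a b c" using abc kernel[OF assms(1)] unfolding Il_def Z_def by (metis (mono_tags, lifting) insertCI mem_Collect_eq)
  thus ?thesis using tri lt abc by metis
qed




definition Lv :: "nat list \<Rightarrow> cvec3" where "Lv t = cross3 (pv (t!0)) (pv (t!1))"

lemma cross_zero_det: assumes "cross3 u v = (0,0,0)" shows "det3 u v w = 0"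
proof -
  have "lin (cross3 u v) w = 0" unfolding assms by (cases w) (simp add: lin_def)
  thus ?thesis by (simp add: lin_cross)
qed

lemma cross_nz: assumes "i < 27" "j < 27" "i \<noteq> j" shows "cross3 (pv i) (pv j) \<noteq> (0,0,0)"
proof
  assume "cross3 (pv i) (pv j) = (0,0,0)"
  hence "\<And>k. Z i j k" unfolding Z_def using cross_zero_det by blast
  thus False using C0[OF assms] by blast
qed

lemma Lv_nz: assumes "t \<in> set Ts" shows "Lv t \<noteq> (0,0,0)"
  using TsOK[OF assms] cross_nz[of "t!0" "t!1"] unfolding Lv_def by simp

lemma Il_Lv: assumes "t \<in> set Ts" shows "Il (Lv t) = set t"
proof -
  have o: "length t = 3" "t!0 < t!1" "t!1 < t!2" "t!2 < 27" "Z (t!0) (t!1) (t!2)" using TsOK[OF assms] by auto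
  have "set t \<subseteq> Il (Lv t)"
    unfolding Ts_set(1)[OF assms] Il_def Lv_def lin_cross
    using o by (auto simp: det3_rep13 det3_rep23 Z_def)
  moreover have "card (Il (Lv t)) \<le> card (set t)"
    using le3[OF Lv_nz[OF assms]] Ts_set(2)[OF assms] by simp
  ultimately show ?thesis using card_seteq[OF Il_fin] by blast
qed

lemma propto: assumes "l \<noteq> (0,0,0)" "lin l u = 0" "lin l v = 0" "cross3 u v \<noteq> (0,0,0)"
  shows "\<exists>c. c \<noteq> 0 \<and> l = sm3 c (cross3 u v)"
proof -
  obtain a b c where l: "l = (a,b,c)" by (cases l) auto
  obtain u1 u2 u3 where u: "u = (u1,u2,u3)" by (cases u) auto
  obtain v1 v2 v3 where v: "v = (v1,v2,v3)" by (cases v) auto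
  define w1 where "w1 = u2*v3 - u3*v2"
  define w2 where "w2 = u3*v1 - u1*v3"
  define w3 where "w3 = u1*v2 - u2*v1"
  have w: "cross3 u v = (w1,w2,w3)" unfolding u v w1_def w2_def w3_def by simp
  have eu: "a*u1 + b*u2 + c*u3 = 0" and ev': "a*v1 + b*v2 + c*v3 = 0"
    using assms(2,3) unfolding l u v lin_def by simp_all
  have i1: "b*w3 - c*w2 = u1*(a*v1 + b*v2 + c*v3) - v1*(a*u1 + b*u2 + c*u3)"
    unfolding w1_def w2_def w3_def by (simp add: algebra_simps)
  have i2: "c*w1 - a*w3 = u2*(a*v1 + b*v2 + c*v3) - v2*(a*u1 + b*u2 + c*u3)"
    unfolding w1_def w2_def w3_def by (simp add: algebra_simps)
  have i3: "a*w2 - b*w1 = u3*(a*v1 + b*v2 + c*v3) - v3*(a*u1 + b*u2 + c*u3)"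
    unfolding w1_def w2_def w3_def by (simp add: algebra_simps)
  have e1: "b*w3 = c*w2" and e2: "c*w1 = a*w3" and e3: "a*w2 = b*w1"
    using i1 i2 i3 eu ev' by simp_all
  have wnz: "w1 \<noteq> 0 \<or> w2 \<noteq> 0 \<or> w3 \<noteq> 0" using assms(4) w by auto
  have lnz: "a \<noteq> 0 \<or> b \<noteq> 0 \<or> c \<noteq> 0" using assms(1) l by auto
  have "\<exists>k. a = k*w1 \<and> b = k*w2 \<and> c = k*w3"
  proof -
    { assume "w1 \<noteq> 0"
      hence "a = (a/w1)*w1 \<and> b = (a/w1)*w2 \<and> c = (a/w1)*w3"
        using e2 e3 by (auto simp: field_simps)
      hence ?thesis by blast }
    moreover
    { assume "w2 \<noteq> 0"
      hence "a = (b/w2)*w1 \<and> b = (b/w2)*w2 \<and> c = (b/w2)*w3"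
        using e1 e3 by (auto simp: field_simps)
      hence ?thesis by blast }
    moreover
    { assume "w3 \<noteq> 0"
      hence "a = (c/w3)*w1 \<and> b = (c/w3)*w2 \<and> c = (c/w3)*w3"
        using e1 e2 by (auto simp: field_simps)
      hence ?thesis by blast }
    ultimately show ?thesis using wnz by blast
  qed
  then obtain k where k: "a = k*w1" "b = k*w2" "c = k*w3" by blast
  have "k \<noteq> 0" using k lnz by auto
  thus ?thesis using k unfolding l w by (intro exI[of _ k]) simp
qed

lemma Il_prop: assumes "l \<noteq> (0,0,0)" "t \<in> set Ts" "Il l = set t"
  shows "\<exists>c. c \<noteq> 0 \<and> l = sm3 c (Lv t)"
proof -
  have o: "length t = 3" "t!0 < t!1" "t!1 < t!2" "t!2 < 27" using TsOK[OF assms(2)] by auto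
  have "t!0 \<in> Il l" "t!1 \<in> Il l" using assms(3) Ts_set(1)[OF assms(2)] by auto
  hence "lin l (pv (t!0)) = 0" "lin l (pv (t!1)) = 0" unfolding Il_def by auto
  moreover have "cross3 (pv (t!0)) (pv (t!1)) \<noteq> (0,0,0)" using o cross_nz by simp
  ultimately show ?thesis using propto[OF assms(1)] unfolding Lv_def by blast
qed


fun prodq :: "cvec3 \<Rightarrow> cvec3 \<Rightarrow> qform" where
  "prodq (a,b,c) (a',b',c') = (a*a', b*b', c*c', a*b'+b*a', b*c'+c*b', c*a'+a*c')"

fun qsm :: "complex \<Rightarrow> qform \<Rightarrow> qform" where
  "qsm k (a,b,c,d,e,f) = (k*a, k*b, k*c, k*d, k*e, k*f)"

lemma qf_prodq: "qf (prodq l l') v = lin l v * lin l' v"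
  by (cases l; cases l'; cases v) (simp add: qf_def lin_def algebra_simps power2_eq_square)

lemma qf_qsm: "qf (qsm k q) v = k * qf q v"
  by (cases q; cases v) (simp add: qf_def algebra_simps)

lemma qf_determ: assumes "\<forall>v. qf q v = lin l v * lin l' v" shows "q = prodq l l'"
proof -
  obtain a b c d e f where q: "q = (a,b,c,d,e,f)" by (cases q) auto
  obtain l1 l2 l3 where l: "l = (l1,l2,l3)" by (cases l) auto
  obtain m1 m2 m3 where m: "l' = (m1,m2,m3)" by (cases l') auto
  have h: "\<And>x y z. a*x^2 + b*y^2 + c*z^2 + d*x*y + e*y*z + f*z*x = (l1*x+l2*y+l3*z)*(m1*x+m2*y+m3*z)"
    using assms unfolding q l m qf_def lin_def by auto
  have 1: "a = l1*m1" using h[of 1 0 0] by simp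
  have 2: "b = l2*m2" using h[of 0 1 0] by simp
  have 3: "c = l3*m3" using h[of 0 0 1] by simp
  have 4: "d = l1*m2 + l2*m1" using h[of 1 1 0] 1 2 by (simp add: algebra_simps)
  have 5: "e = l2*m3 + l3*m2" using h[of 0 1 1] 2 3 by (simp add: algebra_simps)
  have 6: "f = l3*m1 + l1*m3" using h[of 1 0 1] 1 3 by (simp add: algebra_simps)
  show ?thesis unfolding q l m using 1 2 3 4 5 6 by simp
qed

lemma prodq_sm: "prodq (sm3 c l) (sm3 c' l') = qsm (c*c') (prodq l l')"
  by (cases l; cases l') (simp add: algebra_simps)

lemma prodq_comm: "prodq l l' = prodq l' l"
  by (cases l; cases l') (simp add: algebra_simps)

lemma conic_of_qsm: assumes "k \<noteq> 0" shows "conic_of (qsm k q) = conic_of q"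
proof -
  obtain a b c d e f where q: "q = (a,b,c,d,e,f)" by (cases q) auto
  show ?thesis unfolding q
  proof (rule set_eqI)
    fix x
    show "x \<in> conic_of (qsm k (a,b,c,d,e,f)) \<longleftrightarrow> x \<in> conic_of (a,b,c,d,e,f)"
    proof
      assume "x \<in> conic_of (qsm k (a,b,c,d,e,f))"
      then obtain j where "j \<noteq> 0" "x = (j*(k*a), j*(k*b), j*(k*c), j*(k*d), j*(k*e), j*(k*f))"
        unfolding conic_of_def by auto
      thus "x \<in> conic_of (a,b,c,d,e,f)" unfolding conic_of_def using assms
        by (auto intro!: exI[of _ "j*k"])
    next
      assume "x \<in> conic_of (a,b,c,d,e,f)"
      then obtain j where "j \<noteq> 0" "x = (j*a, j*b, j*c, j*d, j*e, j*f)"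
        unfolding conic_of_def by auto
      thus "x \<in> conic_of (qsm k (a,b,c,d,e,f))" unfolding conic_of_def using assms
        by (auto intro!: exI[of _ "j/k"])
    qed
  qed
qed

lemma conic_eq: assumes "conic_of q1 = conic_of q2" shows "\<exists>k. k \<noteq> 0 \<and> q2 = qsm k q1"
proof -
  obtain a b c d e f where q2: "q2 = (a,b,c,d,e,f)" by (cases q2) auto
  have "q2 \<in> conic_of q2" unfolding q2 conic_of_def by (auto intro!: exI[of _ 1])
  hence "q2 \<in> conic_of q1" using assms by simp
  thus ?thesis by (cases q1) (auto simp: conic_of_def)
qed

definition Jq :: "qform \<Rightarrow> nat set" where "Jq q = {k. k < 27 \<and> qf q (pv k) = 0}"

lemma Jq_fin: "finite (Jq q)" unfolding Jq_def by simp

lemma Jq_qsm: "k \<noteq> 0 \<Longrightarrow> Jq (qsm k q) = Jq q"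
  unfolding Jq_def by (simp add: qf_qsm)

lemma Jq_prod: assumes "\<forall>v. qf q v = lin l v * lin l' v" shows "Jq q = Il l \<union> Il l'"
proof -
  have h: "\<And>k. qf q (pv k) = lin l (pv k) * lin l' (pv k)" using assms by blast
  show ?thesis unfolding Jq_def Il_def using h by auto
qed

lemma det3_sm2: "det3 u (sm3 c v) w = c * det3 u v w"
  by (cases u; cases v; cases w) (simp add: algebra_simps)

lemma inj_pp: "inj_on pp {..<27}"
proof (rule inj_onI)
  fix i j assume i: "i \<in> {..<27}" and j: "j \<in> {..<27}" and e: "pp i = pp j"
  show "i = j"
  proof (rule ccontr)
    assume ne: "i \<noteq> j"
    have "pv j \<in> proj_pt (pv i)" using e self_proj unfolding pp_def by metis
    then obtain c where c: "pv j = sm3 c (pv i)" unfolding mem_proj by blast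
    have "\<And>k. Z i j k" unfolding Z_def c det3_sm2 by (simp add: det3_rep12)
    thus False using C0[OF _ _ ne] i j by auto
  qed
qed

lemma line_set: "{P \<in> sextactic. on_line l P} = pp ` Il l"
  unfolding sext_eq Il_def pp_def by (auto simp: on_line_proj)

lemma conic_set: "{P \<in> sextactic. on_conic q P} = pp ` Jq q"
  unfolding sext_eq Jq_def pp_def by (auto simp: on_conic_proj)

lemma card_line: "card {P \<in> sextactic. on_line l P} = card (Il l)"
  unfolding line_set by (rule card_image) (rule inj_on_subset[OF inj_pp], auto simp: Il_def)

lemma card_conic: "card {P \<in> sextactic. on_conic q P} = card (Jq q)"
  unfolding conic_set by (rule card_image) (rule inj_on_subset[OF inj_pp], auto simp: Jq_def)

lemma lin_sml: "lin (sm3 k l) v = k * lin l v"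
  by (cases l; cases v) (simp add: lin_def algebra_simps)

lemma lin0: "lin (0,0,0) v = 0" by (cases v) (simp add: lin_def)

lemma factor: assumes "q \<noteq> (0,0,0,0,0,0)" "6 \<le> card (Jq q)" "\<forall>v. qf q v = lin l v * lin l' v"
  shows "l \<noteq> (0,0,0) \<and> l' \<noteq> (0,0,0) \<and> card (Il l) = 3 \<and> card (Il l') = 3 \<and> Il l \<inter> Il l' = {}"
proof -
  have ln: "l \<noteq> (0,0,0)"
  proof
    assume "l = (0,0,0)"
    hence "q = prodq (0,0,0) l'" using qf_determ[OF assms(3)] by simp
    thus False using assms(1) by (cases l') simp
  qed
  have ln': "l' \<noteq> (0,0,0)"
  proof
    assume "l' = (0,0,0)"
    hence "q = prodq l (0,0,0)" using qf_determ[OF assms(3)] by simp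
    thus False using assms(1) by (cases l) simp
  qed
  have J: "Jq q = Il l \<union> Il l'" by (rule Jq_prod[OF assms(3)])
  have a: "card (Il l) \<le> 3" "card (Il l') \<le> 3" using le3 ln ln' by auto
  have u: "card (Il l \<union> Il l') \<le> card (Il l) + card (Il l')" by (rule card_Un_le)
  have s6: "6 \<le> card (Il l \<union> Il l')" using assms(2) J by simp
  have c3: "card (Il l) = 3" "card (Il l') = 3" using a u s6 by linarith+
  have "card (Il l \<union> Il l') + card (Il l \<inter> Il l') = card (Il l) + card (Il l')"
    using card_Un_Int[OF Il_fin Il_fin] by simp
  hence "card (Il l \<inter> Il l') = 0" using c3 u s6 by linarith
  hence "Il l \<inter> Il l' = {}" using Il_fin by simp
  thus ?thesis using ln ln' c3 by blast
qed

lemma Ts_idx: assumes "t \<in> set Ts" shows "\<exists>a<81. Ts!a = t"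
  using assms compLen by (metis in_set_conv_nth)

lemma Ts_mem: "a < 81 \<Longrightarrow> Ts!a \<in> set Ts"
  using compLen by simp

lemma C5idx: assumes "a < 81" "b < 81" "a \<noteq> b" shows "card (set (Ts!a) \<inter> set (Ts!b)) \<le> 1"
proof -
  have h: "\<forall>a\<in>{0..<81}. \<forall>b\<in>{Suc a..<81}. length (filter (\<lambda>x. x \<in> set (Ts!b)) (Ts!a)) \<le> 1"
    using compC5 by (simp only: list_all_iff set_upt)
  have gen: "card (set (Ts!a') \<inter> set (Ts!b')) \<le> 1" if "a' < b'" "b' < 81" for a' b'
  proof -
    have "card (set (Ts!a') \<inter> set (Ts!b')) = card (set (filter (\<lambda>x. x \<in> set (Ts!b')) (Ts!a')))"
      by (simp add: Int_def)
    also have "\<dots> \<le> length (filter (\<lambda>x. x \<in> set (Ts!b')) (Ts!a'))" by (rule card_length)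
    also have "\<dots> \<le> 1"
    proof -
      have "a' \<in> {0..<81}" "b' \<in> {Suc a'..<81}" using that by auto
      thus ?thesis using h by blast
    qed
    finally show ?thesis .
  qed
  show ?thesis
  proof (cases "a < b")
    case True thus ?thesis using gen[of a b] assms by blast
  next
    case False hence "b < a" using assms by simp
    thus ?thesis using gen[of b a] assms by (metis Int_commute)
  qed
qed

lemma sub_two: assumes "a < 81" "b < 81" "c < 81" "set (Ts!c) \<subseteq> set (Ts!a) \<union> set (Ts!b)"
  shows "c = a \<or> c = b"
proof (rule ccontr)
  assume n: "\<not> (c = a \<or> c = b)"
  have "set (Ts!c) = (set (Ts!c) \<inter> set (Ts!a)) \<union> (set (Ts!c) \<inter> set (Ts!b))" using assms(4) by blast
  hence "card (set (Ts!c)) \<le> card (set (Ts!c) \<inter> set (Ts!a)) + card (set (Ts!c) \<inter> set (Ts!b))"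
    by (metis card_Un_le)
  also have "\<dots> \<le> 2" using C5idx[of c a] C5idx[of c b] assms n by force
  finally show False using Ts_set(2)[OF Ts_mem[OF assms(3)]] by simp
qed

lemma comb: assumes "a < b" "b < 81" "c < d" "d < 81"
  "set (Ts!a) \<union> set (Ts!b) = set (Ts!c) \<union> set (Ts!d)"
  shows "a = c \<and> b = d"
proof -
  have "c = a \<or> c = b" using sub_two[of a b c] assms by auto
  moreover have "d = a \<or> d = b" using sub_two[of a b d] assms by auto
  ultimately show ?thesis using assms by auto
qed


definition DD :: "(nat \<times> nat) set" where
  "DD = {(a,b). a < b \<and> b < 81 \<and> set (Ts!a) \<inter> set (Ts!b) = {}}"

definition gg :: "nat \<times> nat \<Rightarrow> qform set" where
  "gg p = conic_of (prodq (Lv (Ts!fst p)) (Lv (Ts!snd p)))"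

lemma card_DD: "card DD = 2268"
proof -
  have e: "DD = (SIGMA a:{..<81}. set (filter (disjc a) [Suc a..<81]))"
    unfolding DD_def disjc_def by (auto simp: list_all_iff)
  have "card DD = (\<Sum>a\<in>{..<81}. card (set (filter (disjc a) [Suc a..<81])))"
    unfolding e by (rule card_SigmaI) auto
  also have "\<dots> = (\<Sum>a\<in>{..<81}. length (filter (disjc a) [Suc a..<81]))"
    by (intro sum.cong refl distinct_card distinct_filter distinct_upt)
  also have "\<dots> = (\<Sum>a\<in>set [0..<81]. length (filter (disjc a) [Suc a..<81]))"
    by (simp only: set_upt lessThan_atLeast0)
  also have "\<dots> = sum_list (map (\<lambda>a. length (filter (disjc a) [Suc a..<81])) [0..<81])"
    by (rule sum_set_upt_conv_sum_list_nat)
  also have "\<dots> = 2268" using compCount by simp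
  finally show ?thesis .
qed

lemma inj_gg: "inj_on gg DD"
proof (rule inj_onI)
  fix p1 p2 assume p1: "p1 \<in> DD" and p2: "p2 \<in> DD" and e: "gg p1 = gg p2"
  obtain a b where ab: "p1 = (a,b)" by (cases p1) auto
  obtain c d where cd: "p2 = (c,d)" by (cases p2) auto
  have o: "a < b" "b < 81" "c < d" "d < 81" using p1 p2 ab cd unfolding DD_def by auto
  obtain k where k: "k \<noteq> 0" "prodq (Lv (Ts!c)) (Lv (Ts!d)) = qsm k (prodq (Lv (Ts!a)) (Lv (Ts!b)))"
    using conic_eq[of "prodq (Lv (Ts!a)) (Lv (Ts!b))" "prodq (Lv (Ts!c)) (Lv (Ts!d))"] e ab cd
    unfolding gg_def by auto
  have "Jq (prodq (Lv (Ts!c)) (Lv (Ts!d))) = Jq (prodq (Lv (Ts!a)) (Lv (Ts!b)))"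
    using k Jq_qsm by simp
  moreover have "\<And>x y. x < 81 \<Longrightarrow> y < 81 \<Longrightarrow> Jq (prodq (Lv (Ts!x)) (Lv (Ts!y))) = set (Ts!x) \<union> set (Ts!y)"
    using Jq_prod[OF allI[OF qf_prodq]] Il_Lv Ts_mem by simp
  ultimately have "set (Ts!a) \<union> set (Ts!b) = set (Ts!c) \<union> set (Ts!d)" using o by simp
  thus "p1 = p2" using comb[OF o] ab cd by simp
qed

lemma Cset_eq: "{conic_of q | q. q \<noteq> (0, 0, 0, 0, 0, 0) \<and>
              card {P \<in> sextactic. on_conic q P} \<ge> 6 \<and> reducible q} = gg ` DD"
proof (rule set_eqI)
  fix x
  show "x \<in> {conic_of q | q. q \<noteq> (0, 0, 0, 0, 0, 0) \<and>
              card {P \<in> sextactic. on_conic q P} \<ge> 6 \<and> reducible q} \<longleftrightarrow> x \<in> gg ` DD"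
  proof
    assume "x \<in> {conic_of q | q. q \<noteq> (0, 0, 0, 0, 0, 0) \<and>
              card {P \<in> sextactic. on_conic q P} \<ge> 6 \<and> reducible q}"
    then obtain q where x: "x = conic_of q" and q0: "q \<noteq> (0,0,0,0,0,0)"
      and c6: "6 \<le> card (Jq q)" and r: "reducible q" unfolding card_conic by blast
    obtain l l' where ll: "\<forall>v. qf q v = lin l v * lin l' v" using r unfolding reducible_def by blast
    have f: "l \<noteq> (0,0,0)" "l' \<noteq> (0,0,0)" "card (Il l) = 3" "card (Il l') = 3" "Il l \<inter> Il l' = {}"
      using factor[OF q0 c6 ll] by auto
    obtain t1 where t1: "t1 \<in> set Ts" "Il l = set t1" using eq3 f by blast
    obtain t2 where t2: "t2 \<in> set Ts" "Il l' = set t2" using eq3 f by blast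
    obtain a where a: "a < 81" "Ts!a = t1" using Ts_idx t1 by blast
    obtain b where b: "b < 81" "Ts!b = t2" using Ts_idx t2 by blast
    obtain c where c: "c \<noteq> 0" "l = sm3 c (Lv t1)" using Il_prop f t1 by blast
    obtain c' where c': "c' \<noteq> 0" "l' = sm3 c' (Lv t2)" using Il_prop f t2 by blast
    have "q = qsm (c*c') (prodq (Lv t1) (Lv t2))" using qf_determ[OF ll] c c' prodq_sm by simp
    hence x': "x = conic_of (prodq (Lv t1) (Lv t2))" using x c c' conic_of_qsm by simp
    have dj: "set t1 \<inter> set t2 = {}" using f t1 t2 by simp
    have "a \<noteq> b"
    proof
      assume "a = b" hence "t1 = t2" using a b by simp
      hence "set t1 = {}" using dj by simp
      thus False using f t1 by simp
    qed
    show "x \<in> gg ` DD"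
    proof (cases "a < b")
      case True
      hence "(a,b) \<in> DD" unfolding DD_def using a b dj by simp
      moreover have "x = gg (a,b)" unfolding gg_def using x' a b by simp
      ultimately show ?thesis by blast
    next
      case False
      hence "b < a" using \<open>a \<noteq> b\<close> by simp
      hence "(b,a) \<in> DD" unfolding DD_def using a b dj by (auto simp: Int_commute)
      moreover have "x = gg (b,a)" unfolding gg_def using x' a b prodq_comm by simp
      ultimately show ?thesis by blast
    qed
  next
    assume "x \<in> gg ` DD"
    then obtain a b where ab: "(a,b) \<in> DD" "x = gg (a,b)" by auto
    have o: "a < b" "b < 81" "set (Ts!a) \<inter> set (Ts!b) = {}" using ab unfolding DD_def by auto
    define q where "q = prodq (Lv (Ts!a)) (Lv (Ts!b))"
    have J: "Jq q = set (Ts!a) \<union> set (Ts!b)"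
      unfolding q_def using Jq_prod[OF allI[OF qf_prodq]] Il_Lv Ts_mem o by simp
    have c6: "card (Jq q) = 6" unfolding J
      using card_Un_disjoint[OF List.finite_set List.finite_set o(3)] Ts_set(2)[OF Ts_mem] o by simp
    have q0: "q \<noteq> (0,0,0,0,0,0)"
    proof
      assume "q = (0,0,0,0,0,0)"
      hence "Jq q = {..<27}" unfolding Jq_def by (auto simp: qf_def)
      thus False using c6 by simp
    qed
    have r: "reducible q" unfolding reducible_def q_def using qf_prodq by blast
    have "x = conic_of q" using ab unfolding gg_def q_def by simp
    thus "x \<in> {conic_of q | q. q \<noteq> (0, 0, 0, 0, 0, 0) \<and>
              card {P \<in> sextactic. on_conic q P} \<ge> 6 \<and> reducible q}"
    proof -
      have "6 \<le> card (Jq q)" using c6 by simp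
      thus ?thesis unfolding card_conic using q0 r \<open>x = conic_of q\<close> by blast
    qed
  qed
qed

theorem mainTheorem7:
  shows "card {conic_of q | q. q \<noteq> (0, 0, 0, 0, 0, 0) \<and>
              card {P \<in> sextactic. on_conic q P} \<ge> 6 \<and> reducible q} = 2268
    \<and> (\<forall>q. q \<noteq> (0, 0, 0, 0, 0, 0) \<and> card {P \<in> sextactic. on_conic q P} \<ge> 6 \<and> reducible q \<longrightarrow>
         (\<forall>l l'. (\<forall>v. qf q v = lin l v * lin l' v) \<longrightarrow>
            \<not> same_line l l' \<and>
            card {P \<in> sextactic. on_line l P} = 3 \<and>
            card {P \<in> sextactic. on_line l' P} = 3 \<and>
            (\<forall>P\<in>sextactic. \<not> (on_line l P \<and> on_line l' P))))"
proof
  show "card {conic_of q | q. q \<noteq> (0, 0, 0, 0, 0, 0) \<and>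
              card {P \<in> sextactic. on_conic q P} \<ge> 6 \<and> reducible q} = 2268"
    unfolding Cset_eq using card_image[OF inj_gg] card_DD by simp
next
  show "\<forall>q. q \<noteq> (0, 0, 0, 0, 0, 0) \<and> card {P \<in> sextactic. on_conic q P} \<ge> 6 \<and> reducible q \<longrightarrow>
         (\<forall>l l'. (\<forall>v. qf q v = lin l v * lin l' v) \<longrightarrow>
            \<not> same_line l l' \<and>
            card {P \<in> sextactic. on_line l P} = 3 \<and>
            card {P \<in> sextactic. on_line l' P} = 3 \<and>
            (\<forall>P\<in>sextactic. \<not> (on_line l P \<and> on_line l' P)))"
  proof (intro allI impI)
    fix q l l'
    assume h: "q \<noteq> (0, 0, 0, 0, 0, 0) \<and> card {P \<in> sextactic. on_conic q P} \<ge> 6 \<and> reducible q"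
      and ll: "\<forall>v. qf q v = lin l v * lin l' v"
    have c6: "6 \<le> card (Jq q)" using h unfolding card_conic by simp
    have f: "l \<noteq> (0,0,0)" "l' \<noteq> (0,0,0)" "card (Il l) = 3" "card (Il l') = 3" "Il l \<inter> Il l' = {}"
      using factor[of q l l'] h c6 ll by auto
    have ns: "\<not> same_line l l'"
    proof
      assume "same_line l l'"
      then obtain k where k: "k \<noteq> 0" "l' = sm3 k l" unfolding same_line_def by (cases l) auto
      have "Il l' = Il l" unfolding Il_def k using k(1)
        by (simp add: lin_sml)
      hence "Il l = {}" using f by simp
      thus False using f by simp
    qed
    have np: "\<forall>P\<in>sextactic. \<not> (on_line l P \<and> on_line l' P)"
    proof
      fix P assume "P \<in> sextactic"
      then obtain k where k: "k < 27" "P = pp k" unfolding sext_eq by auto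
      show "\<not> (on_line l P \<and> on_line l' P)"
        using f(5) k unfolding Il_def by (auto simp: pp_def on_line_proj)
    qed
    show "\<not> same_line l l' \<and> card {P \<in> sextactic. on_line l P} = 3 \<and>
            card {P \<in> sextactic. on_line l' P} = 3 \<and> (\<forall>P\<in>sextactic. \<not> (on_line l P \<and> on_line l' P))"
      using ns np f unfolding card_line by simp
  qed
qed


end
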